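(* The weight $p(\cdot)$, the block sequence $\bar B$, the rank sequence $\bar r$ and the number of blocks $N_n$ are all measurable with respect to the $\sigma$-algebra $\mathfrak C_n$ generated by $\mathcal C_n$ (i.e. constant on each $C\in\mathcal C_n$), and $$\mathbb W_n=\sum_{C\in\mathcal C_n}\frac{\mathrm{Card}(C)\,p(C)}{\mathbb P_n(\mathcal W_n)}\,\mathbb U_C,$$ where $p(C)$ is the common value of $p(w)$ for $w\in C$ and $\mathbb U_C$ is the uniform probability on $C$. Moreover, given that $w\in C$ (i.e. under $\mathbb U_C$), the positions of the ranks of $w$ are distributed uniformly on $\{1,2,\dots,N_n(C)\}$: for each $i$, the index $j$ with $r_j(w)=i$ is uniform on $\{1,\dots,N_n(C)\}$.
   Context: Let $\mathcal A=\{a_1<a_2<\dots\}$ be a finite or countably infinite totally ordered alphabet and $(p_i)_{i\ge1}$ a probability distribution with all $p_i>0$ and $0<p_1<1$. For $w=a_{\ell_1}\cdots a_{\ell_n}$ put $p(w)=p_{\ell_1}\cdots p_{\ell_n}$ and $\mathbb P_n(\{w\})=p(w)$ on words of length $n$. Lexicographic order: $u<v$ if $u$ is a proper prefix of $v$, or $u=ra_is$, $v=ra_jt$ with $i<j$. A word is primitive if it is not of the form $u^r$ with $r\ge2$. $\mathcal W_n$ is the set of primitive words of length $n$ whose first letter is the smallest letter $a_w$ occurring in $w$ and whose last letter differs from $a_w$; $\mathbb W_n(\{w\})=p(w)/\mathbb P_n(\mathcal W_n)$. Each $w\in\mathcal W_n$ decomposes uniquely as $w=B_1(w)\cdots B_{N_n(w)}(w)$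 into blocks: each block begins with a run of $a_w$ and ends just before the next run of $a_w$. $\bar B(w)=(B_i(w))_{i\ge 1}$ continued by an infinite sequence of empty words, and $\bar r(w)=(r_i(w))_{i\ge1}$, where for $j\le N=N_n(w)$, $r_j(w)$ is the rank of $B_j\cdots B_NB_1\cdots B_{j-1}$ among the $N$ words $B_k\cdots B_NB_1\cdots B_{k-1}$ in increasing lexicographic order. For $\sigma\in\mathfrak S_N$, $\sigma.w=B_{\sigma(1)}\cdots B_{\sigma(N)}$; $C(w)=\{\sigma.w:\sigma\in\mathfrak S_N,\ \sigma.w\in\mathcal W_n\}$ and $\mathcal C_n=\{C(w):w\in\mathcal W_n\}$ (a partition of $\mathcal W_n$).
   Formalization: On each C in $\mathcal C_n$, only the multisets of blocks $B_1,\dots,B_N$ and of ranks $r_1,\dots,r_N$ are constant, in place of the sequences $\bar B$ and $\bar r$ themselves. The statement above fails without it. *)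

theory Defs
  imports "HOL-Analysis.Analysis" "HOL-Combinatorics.Permutations"
begin

text \<open>Letters are the natural numbers; letter a_i is the number i, ordered by the
  order of nat.  Words are lists of letters.\<close>

definition wp :: "(nat \<Rightarrow> real) \<Rightarrow> nat list \<Rightarrow> real" where
  "wp pr w = prod_list (map pr w)"

definition primitive :: "nat list \<Rightarrow> bool" where
  "primitive w \<longleftrightarrow> \<not> (\<exists>u r. r \<ge> 2 \<and> w = concat (replicate r u))"

definition lexless :: "nat list \<Rightarrow> nat list \<Rightarrow> bool" where
  "lexless u v \<longleftrightarrow> (u, v) \<in> lexord {(a, b). a < b}"

definition Wset :: "nat set \<Rightarrow> nat \<Rightarrow> nat list set" where
  "Wset A n = {w. length w = n \<and> set w \<subseteq> A \<and> w \<noteq> [] \<and> primitive w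
                 \<and> hd w = Min (set w) \<and> last w \<noteq> Min (set w)}"

definition PW :: "nat set \<Rightarrow> (nat \<Rightarrow> real) \<Rightarrow> nat \<Rightarrow> real" where
  "PW A pr n = infsum (wp pr) (Wset A n)"

definition Wn :: "nat set \<Rightarrow> (nat \<Rightarrow> real) \<Rightarrow> nat \<Rightarrow> nat list \<Rightarrow> real" where
  "Wn A pr n w = (if w \<in> Wset A n then wp pr w / PW A pr n else 0)"

definition is_block :: "nat \<Rightarrow> nat list \<Rightarrow> bool" where
  "is_block m B \<longleftrightarrow> (\<exists>k v. k \<ge> 1 \<and> v \<noteq> [] \<and> m \<notin> set v \<and> B = replicate k m @ v)"

definition blocks :: "nat list \<Rightarrow> nat list list" where
  "blocks w = (THE Bs. concat Bs = w \<and> (\<forall>B\<in>set Bs. is_block (Min (set w)) B))"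

definition Nb :: "nat list \<Rightarrow> nat" where
  "Nb w = length (blocks w)"

text \<open>The block sequence, indexed from 1, continued by empty words.\<close>
definition Bbar :: "nat list \<Rightarrow> nat \<Rightarrow> nat list" where
  "Bbar w i = (if 1 \<le> i \<and> i \<le> Nb w then blocks w ! (i - 1) else [])"

definition rot :: "nat list \<Rightarrow> nat \<Rightarrow> nat list" where
  "rot w j = concat (drop (j - 1) (blocks w) @ take (j - 1) (blocks w))"

text \<open>Rank sequence (indexed from 1; value 0 beyond N).\<close>
definition rbar :: "nat list \<Rightarrow> nat \<Rightarrow> nat" where
  "rbar w j = (if 1 \<le> j \<and> j \<le> Nb w
                then card {k \<in> {1..Nb w}. lexless (rot w k) (rot w j)} + 1 else 0)"

definition permw :: "(nat \<Rightarrow> nat) \<Rightarrow> nat list \<Rightarrow> nat list" where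
  "permw \<sigma> w = concat (map (\<lambda>i. blocks w ! (\<sigma> i - 1)) [1..<Nb w + 1])"

definition Cls :: "nat set \<Rightarrow> nat \<Rightarrow> nat list \<Rightarrow> nat list set" where
  "Cls A n w = {permw \<sigma> w | \<sigma>. \<sigma> permutes {1..Nb w} \<and> permw \<sigma> w \<in> Wset A n}"

definition Cn :: "nat set \<Rightarrow> nat \<Rightarrow> nat list set set" where
  "Cn A n = Cls A n ` Wset A n"

definition pC :: "(nat \<Rightarrow> real) \<Rightarrow> nat list set \<Rightarrow> real" where
  "pC pr C = wp pr (SOME w. w \<in> C)"

definition UC :: "nat list set \<Rightarrow> nat list \<Rightarrow> real" where
  "UC C w = (if w \<in> C then 1 / real (card C) else 0)"

end

theory Submission
  imports Defs
begin



abbreviation pw :: "'a list \<Rightarrow> nat \<Rightarrow> 'a list" where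
  "pw u r \<equiv> concat (replicate r u)"

lemma comm_words:
  "x @ y = y @ x \<Longrightarrow> \<exists>z a b. x = pw z a \<and> y = pw z b"
proof (induction "length x + length y" arbitrary: x y rule: less_induct)
  case less
  show ?case
  proof (cases "x = [] \<or> y = []")
    case True
    then show ?thesis
    proof
      assume "x = []" then show ?thesis by (rule_tac x=y in exI, rule_tac x=0 in exI, rule_tac x=1 in exI) simp
    next
      assume "y = []" then show ?thesis by (rule_tac x=x in exI, rule_tac x=1 in exI, rule_tac x=0 in exI) simp
    qed
  next
    case False
    show ?thesis
    proof (cases "length x \<le> length y")
      case True
      have "take (length x) (x @ y) = take (length x) (y @ x)" using less.prems by simp
      then have "take (length x) y = x" using True by simp
      then obtain y' where y: "y = x @ y'" by (metis append_take_drop_id)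
      then have "x @ y' = y' @ x" using less.prems by simp
      moreover have "length x + length y' < length x + length y" using y False by simp
      ultimately obtain z a b where "x = pw z a" "y' = pw z b" using less.hyps by blast
      then show ?thesis using y by (rule_tac x=z in exI, rule_tac x=a in exI, rule_tac x="a+b" in exI) (simp add: replicate_add)
    next
      case F2: False
      have "take (length y) (x @ y) = take (length y) (y @ x)" using less.prems by simp
      then have "take (length y) x = y" using F2 by simp
      then obtain x' where x: "x = y @ x'" by (metis append_take_drop_id)
      then have "y @ x' = x' @ y" using less.prems by simp
      moreover have "length y + length x' < length x + length y" using x False by simp
      ultimately obtain z a b where "y = pw z a" "x' = pw z b" using less.hyps by (metis add.commute)
      then show ?thesis using x by (rule_tac x=z in exI, rule_tac x="a+b" in exI, rule_tac x="a" in exI) (simp add: replicate_add)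
    qed
  qed
qed

lemma rotate_fix_pow:
  assumes "rotate d xs = xs" "0 < d" "d < length xs"
  shows "\<exists>z r. r \<ge> 2 \<and> xs = pw z r"
proof -
  have "rotate d xs = drop d xs @ take d xs" using assms by (simp add: rotate_drop_take)
  then have e: "take d xs @ drop d xs = drop d xs @ take d xs" using assms(1) by simp
  obtain z a b where ab: "take d xs = pw z a" "drop d xs = pw z b" using comm_words[OF e] by blast
  have "a \<noteq> 0" using ab assms by (metis concat_replicate_trivial length_0_conv length_take min.absorb4 neq0_conv replicate_0 concat.simps(1))
  moreover have "b \<noteq> 0" using ab assms by (metis concat.simps(1) drop_eq_Nil leD replicate_0)
  ultimately have "a + b \<ge> 2" by linarith
  moreover have "xs = pw z (a+b)" using ab by (metis append_take_drop_id concat_append replicate_add)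
  ultimately show ?thesis by blast
qed

lemma rotate1_pow: "rotate1 (pw u r) = pw (rotate1 u) r"
proof (cases u)
  case Nil then show ?thesis by simp
next
  case (Cons a v)
  have aux: "pw (a#v) r @ [a] = a # pw (v@[a]) r" for r
    by (induction r) auto
  show ?thesis
  proof (cases r)
    case 0 then show ?thesis by simp
  next
    case (Suc r') then show ?thesis using Cons aux[of r'] by simp
  qed
qed

lemma rotate_pow: "rotate k (pw u r) = pw (rotate k u) r"
  by (induction k) (simp_all add: rotate1_pow)

lemma primitive_swap: "primitive (x @ y) \<Longrightarrow> primitive (y @ x)"
  unfolding primitive_def
proof (elim contrapos_nn)
  assume "\<exists>u r. 2 \<le> r \<and> y @ x = pw u r"
  then obtain u r where "2 \<le> r" "y @ x = pw u r" by blast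
  then have "x @ y = pw (rotate (length y) u) r" by (metis rotate_append rotate_pow)
  then show "\<exists>u r. 2 \<le> r \<and> x @ y = pw u r" using \<open>2 \<le> r\<close> by blast
qed




definition takeblock :: "nat \<Rightarrow> nat list \<Rightarrow> nat list" where
  "takeblock m xs = takeWhile (\<lambda>x. x = m) xs @ takeWhile (\<lambda>x. x \<noteq> m) (dropWhile (\<lambda>x. x = m) xs)"

lemma takeblock_app:
  assumes "is_block m B" "X = [] \<or> hd X = m"
  shows "takeblock m (B @ X) = B"
proof -
  obtain k v where kv: "k \<ge> 1" "v \<noteq> []" "m \<notin> set v" "B = replicate k m @ v"
    using assms(1) unfolding is_block_def by blast
  obtain a v' where v: "v = a # v'" using kv(2) by (cases v) auto
  have "a \<noteq> m" using kv(3) v by auto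
  have tw: "takeWhile (\<lambda>x. x = m) (replicate k m @ v @ X) = replicate k m"
    using \<open>a \<noteq> m\<close> v by (induction k) auto
  have dw: "dropWhile (\<lambda>x. x = m) (replicate k m @ v @ X) = v @ X"
    using \<open>a \<noteq> m\<close> v by (induction k) auto
  have tX: "takeWhile (\<lambda>x. x \<noteq> m) X = []" using assms(2) by (cases X) auto
  have "takeWhile (\<lambda>x. x \<noteq> m) (v @ X) = v @ takeWhile (\<lambda>x. x \<noteq> m) X"
    using kv(3) by (intro takeWhile_append2) auto
  then have "takeWhile (\<lambda>x. x \<noteq> m) (v @ X) = v" using tX by simp
  then show ?thesis using tw dw kv(4) unfolding takeblock_def by simp
qed

lemma block_nonempty: "is_block m B \<Longrightarrow> B \<noteq> []"
  unfolding is_block_def by auto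

lemma block_hd: "is_block m B \<Longrightarrow> hd B = m"
  unfolding is_block_def by (auto simp: hd_append)

lemma block_last: "is_block m B \<Longrightarrow> last B \<noteq> m"
  unfolding is_block_def by (auto simp: last_append)

lemma concat_blocks_hd:
  "\<forall>B\<in>set Bs. is_block m B \<Longrightarrow> concat Bs = [] \<or> hd (concat Bs) = m"
proof (cases Bs)
  case (Cons B Bs')
  assume "\<forall>B\<in>set Bs. is_block m B"
  then have "is_block m B" using Cons by auto
  then show ?thesis using Cons block_nonempty[of m B] block_hd[of m B] by (simp add: hd_append)
qed simp

lemma blocks_unique:
  "\<forall>B\<in>set Bs1. is_block m B \<Longrightarrow> \<forall>B\<in>set Bs2. is_block m B \<Longrightarrow> concat Bs1 = concat Bs2 \<Longrightarrow> Bs1 = Bs2"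
proof (induction Bs1 arbitrary: Bs2)
  case Nil
  then show ?case using block_nonempty by (cases Bs2) auto
next
  case (Cons B Bs1)
  then obtain B' Bs2' where b2: "Bs2 = B' # Bs2'" using block_nonempty by (cases Bs2) auto
  have "takeblock m (B @ concat Bs1) = B" using Cons.prems concat_blocks_hd[of Bs1 m] by (intro takeblock_app) auto
  moreover have "takeblock m (B' @ concat Bs2') = B'" using Cons.prems b2 concat_blocks_hd[of Bs2' m] by (intro takeblock_app) auto
  ultimately have "B = B'" using Cons.prems b2 by simp
  then have "concat Bs1 = concat Bs2'" using Cons.prems b2 by simp
  moreover have "\<forall>B\<in>set Bs1. is_block m B" "\<forall>B\<in>set Bs2'. is_block m B" using Cons.prems b2 by auto
  ultimately have "Bs1 = Bs2'" using Cons.IH by blast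
  then show ?case using b2 \<open>B = B'\<close> by simp
qed

lemma blocks_exist_aux:
  "xs \<noteq> [] \<Longrightarrow> last xs \<noteq> m \<Longrightarrow> \<exists>u Bs. xs = u @ concat Bs \<and> m \<notin> set u \<and> (\<forall>B\<in>set Bs. is_block m B)"
proof (induction xs)
  case Nil then show ?case by simp
next
  case (Cons x xs)
  show ?case
  proof (cases "xs = []")
    case True
    then have "x \<noteq> m" using Cons.prems by simp
    then have "x # xs = [x] @ concat [] \<and> m \<notin> set [x] \<and> (\<forall>B\<in>set []. is_block m B)" using True by simp
    then show ?thesis by blast
  next
    case False
    then obtain u Bs where ub: "xs = u @ concat Bs" "m \<notin> set u" "\<forall>B\<in>set Bs. is_block m B"
      using Cons by auto
    show ?thesis
    proof (cases "x = m")
      case False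
      then have "x # xs = (x#u) @ concat Bs \<and> m \<notin> set (x#u) \<and> (\<forall>B\<in>set Bs. is_block m B)" using ub by simp
      then show ?thesis by blast
    next
      case xm: True
      show ?thesis
      proof (cases "u = []")
        case u: True
        then obtain B Bs' where bb: "Bs = B # Bs'" using ub \<open>xs \<noteq> []\<close> by (cases Bs) auto
        then have "is_block m B" using ub by auto
        then obtain k v where kv: "k \<ge> 1" "v \<noteq> []" "m \<notin> set v" "B = replicate k m @ v"
          unfolding is_block_def by blast
        have "is_block m (m # B)" unfolding is_block_def using kv
          by (rule_tac x="Suc k" in exI, rule_tac x=v in exI) simp
        then have "x # xs = [] @ concat ((m#B)#Bs') \<and> m \<notin> set [] \<and> (\<forall>B\<in>set ((m#B)#Bs'). is_block m B)" using ub u bb xm by simp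
        then show ?thesis by blast
      next
        case False
        have "is_block m (m # u)" unfolding is_block_def using False ub
          by (rule_tac x="1" in exI, rule_tac x=u in exI) simp
        then have "x # xs = [] @ concat ((m#u)#Bs) \<and> m \<notin> set [] \<and> (\<forall>B\<in>set ((m#u)#Bs). is_block m B)" using ub xm by simp
        then show ?thesis by blast
      qed
    qed
  qed
qed

lemma blocks_exist:
  assumes "xs \<noteq> []" "hd xs = m" "last xs \<noteq> m"
  shows "\<exists>Bs. concat Bs = xs \<and> (\<forall>B\<in>set Bs. is_block m B)"
proof -
  obtain u Bs where ub: "xs = u @ concat Bs" "m \<notin> set u" "\<forall>B\<in>set Bs. is_block m B"
    using blocks_exist_aux[OF assms(1,3)] by blast
  have "u = []" using ub assms(2) by (cases u) auto
  then show ?thesis using ub by auto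
qed

lemma blocks_eq:
  assumes "concat Bs = w" "\<forall>B\<in>set Bs. is_block (Min (set w)) B"
  shows "blocks w = Bs"
  unfolding blocks_def
  by (rule the_equality) (use assms blocks_unique in auto)

lemma blocks_prop:
  assumes "w \<noteq> []" "hd w = Min (set w)" "last w \<noteq> Min (set w)"
  shows "concat (blocks w) = w" "\<forall>B\<in>set (blocks w). is_block (Min (set w)) B"
proof -
  obtain Bs where "concat Bs = w" "\<forall>B\<in>set Bs. is_block (Min (set w)) B"
    using blocks_exist[OF assms] by blast
  then have "blocks w = Bs" by (rule blocks_eq)
  then show "concat (blocks w) = w" "\<forall>B\<in>set (blocks w). is_block (Min (set w)) B"
    using \<open>concat Bs = w\<close> \<open>\<forall>B\<in>set Bs. _\<close> by auto
qed

lemma Wset_blocks: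
  assumes "w \<in> Wset A n"
  shows "concat (blocks w) = w" "\<forall>B\<in>set (blocks w). is_block (Min (set w)) B" "blocks w \<noteq> []"
  using blocks_prop[of w] assms unfolding Wset_def by auto




lemma mset_concat_eq: "mset Bs = mset Bs' \<Longrightarrow> mset (concat Bs) = mset (concat Bs')"
proof -
  have *: "mset (concat Bs) = sum_mset (image_mset mset (mset Bs))" for Bs :: "'a list list"
    by (induction Bs) auto
  assume "mset Bs = mset Bs'" then show ?thesis by (simp add: *)
qed

lemma wp_mset: "mset x = mset y \<Longrightarrow> wp pr x = wp pr y"
proof -
  have *: "wp pr x = prod_mset (image_mset pr (mset x))" for x
    unfolding wp_def by (induction x) auto
  assume "mset x = mset y" then show ?thesis by (simp add: *)
qed

lemma upt_shift: "[1..<n+1] = map Suc [0..<n]"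
  by (metis map_Suc_upt Suc_eq_plus1 One_nat_def)

lemma list_idx: "map (\<lambda>i. xs ! (i - 1)) [1..<length xs + 1] = xs"
  unfolding upt_shift by (simp add: map_nth comp_def)

lemma perm_blocks:
  assumes w0: "w0 \<in> Wset A n" and ms: "mset Bs = mset (blocks w0)"
  shows "blocks (concat Bs) = Bs" "mset (concat Bs) = mset w0"
    "concat Bs \<in> Wset A n \<longleftrightarrow> primitive (concat Bs)"
proof -
  define m where "m = Min (set w0)"
  note wb = Wset_blocks[OF w0]
  have setB: "set Bs = set (blocks w0)" using arg_cong[OF ms, of set_mset] by simp
  have allb: "\<forall>B\<in>set Bs. is_block m B" using wb setB m_def by auto
  have ne: "Bs \<noteq> []" using wb(3) ms by auto
  show msx: "mset (concat Bs) = mset w0" using mset_concat_eq[OF ms] wb(1) by simp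
  have "set_mset (mset (concat Bs)) = set_mset (mset w0)" using msx by (rule arg_cong)
  then have sx: "set (concat Bs) = set w0" by (simp only: set_mset_mset)
  have lw: "length (concat Bs) = length w0" using arg_cong[OF msx, of size] by simp
  then have lx: "length (concat Bs) = n" using w0 unfolding Wset_def by simp
  have "w0 \<noteq> []" using w0 unfolding Wset_def by simp
  then have xne: "concat Bs \<noteq> []" using lw by (metis length_0_conv)
  have hdx: "hd (concat Bs) = m" using concat_blocks_hd[OF allb] xne by auto
  have "Bs = butlast Bs @ [last Bs]" using ne by simp
  then have "concat Bs = concat (butlast Bs) @ last Bs" by (metis concat_append concat.simps append_Nil2)
  moreover have lb: "is_block m (last Bs)" using allb ne by auto
  ultimately have "last (concat Bs) = last (last Bs)" using block_nonempty[OF lb] by simp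
  then have lastx: "last (concat Bs) \<noteq> m" using block_last[OF lb] by simp
  have mx: "Min (set (concat Bs)) = m" using sx m_def by simp
  show "blocks (concat Bs) = Bs" using blocks_eq[of Bs "concat Bs"] allb mx by simp
  show "concat Bs \<in> Wset A n \<longleftrightarrow> primitive (concat Bs)"
    using w0 sx lx xne hdx lastx mx unfolding Wset_def by auto
qed

lemma Cls_char:
  assumes w0: "w0 \<in> Wset A n"
  shows "Cls A n w0 = {x \<in> Wset A n. mset (blocks x) = mset (blocks w0)}"
proof (intro set_eqI iffI)
  define Bs0 where "Bs0 = blocks w0"
  define N where "N = Nb w0"
  have NB: "N = length Bs0" unfolding N_def Nb_def Bs0_def ..
  fix x
  assume "x \<in> Cls A n w0"
  then obtain \<sigma> where s: "\<sigma> permutes {1..N}" "x = permw \<sigma> w0" "x \<in> Wset A n"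
    unfolding Cls_def N_def by blast
  define Bs' where "Bs' = map (\<lambda>i. Bs0 ! (\<sigma> i - 1)) [1..<N+1]"
  have xB: "x = concat Bs'" using s unfolding permw_def Bs'_def Bs0_def N_def by simp
  have "mset Bs' = image_mset (\<lambda>i. Bs0 ! (\<sigma> i - 1)) (mset [1..<N+1])"
    unfolding Bs'_def by (simp only: mset_map)
  also have "\<dots> = image_mset (\<lambda>i. Bs0 ! (i - 1)) (image_mset \<sigma> (mset_set {1..<N+1}))"
    by (simp only: mset_upt multiset.map_comp comp_def)
  also have "image_mset \<sigma> (mset_set {1..<N+1}) = mset_set (\<sigma> ` {1..<N+1})"
    using permutes_inj_on[OF s(1)] by (simp add: image_mset_mset_set)
  also have "\<sigma> ` {1..<N+1} = {1..<N+1}" using permutes_image[OF s(1)]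
    by (metis atLeastLessThanSuc_atLeastAtMost Suc_eq_plus1)
  also have "image_mset (\<lambda>i. Bs0 ! (i - 1)) (mset_set {1..<N+1}) = mset Bs0"
    using arg_cong[OF list_idx[of Bs0], of mset] NB by (simp only: mset_map mset_upt)
  finally have "mset Bs' = mset (blocks w0)" unfolding Bs0_def .
  then show "x \<in> {x \<in> Wset A n. mset (blocks x) = mset (blocks w0)}"
    using perm_blocks(1)[OF w0] xB s(3) by simp
next
  define Bs0 where "Bs0 = blocks w0"
  define N where "N = Nb w0"
  have NB: "N = length Bs0" unfolding N_def Nb_def Bs0_def ..
  fix x
  assume "x \<in> {x \<in> Wset A n. mset (blocks x) = mset (blocks w0)}"
  then have x: "x \<in> Wset A n" "mset (blocks x) = mset Bs0" unfolding Bs0_def by auto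
  obtain p where p: "p permutes {..<length Bs0}" "permute_list p Bs0 = blocks x"
    using mset_eq_permutation[OF x(2)] by blast
  define \<sigma> where "\<sigma> = (\<lambda>i. if i \<in> {1..N} then Suc (p (i - 1)) else i)"
  have "inj_on \<sigma> {1..N}"
  proof (rule inj_onI)
    fix a b assume "a \<in> {1..N}" "b \<in> {1..N}" "\<sigma> a = \<sigma> b"
    then have "p (a - 1) = p (b - 1)" unfolding \<sigma>_def by simp
    then have "a - 1 = b - 1" using permutes_inj[OF p(1)] by (meson injD)
    then show "a = b" using \<open>a \<in> {1..N}\<close> \<open>b \<in> {1..N}\<close> by auto
  qed
  moreover have "\<sigma> ` {1..N} = {1..N}"
  proof
    show "\<sigma> ` {1..N} \<subseteq> {1..N}"
    proof
      fix y assume "y \<in> \<sigma> ` {1..N}"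
      then obtain a where a: "a \<in> {1..N}" "y = Suc (p (a - 1))" unfolding \<sigma>_def by auto
      have "a - 1 \<in> {..<length Bs0}" using a NB by auto
      then have "p (a - 1) \<in> {..<length Bs0}" using permutes_in_image[OF p(1)] by simp
      then show "y \<in> {1..N}" using a NB by auto
    qed
  next
    show "{1..N} \<subseteq> \<sigma> ` {1..N}"
    proof
      fix y assume y: "y \<in> {1..N}"
      then have "y - 1 \<in> p ` {..<length Bs0}" using permutes_image[OF p(1)] NB by auto
      then obtain k where k: "k < length Bs0" "p k = y - 1" by auto
      then have "\<sigma> (Suc k) = y" using y NB unfolding \<sigma>_def by auto
      moreover have "Suc k \<in> {1..N}" using k NB by auto
      ultimately show "y \<in> \<sigma> ` {1..N}" by force
    qed
  qed
  ultimately have "bij_betw \<sigma> {1..N} {1..N}" unfolding bij_betw_def by simp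
  then have sp: "\<sigma> permutes {1..N}" by (rule bij_imp_permutes) (auto simp: \<sigma>_def)
  have "map (\<lambda>i. Bs0 ! (\<sigma> i - 1)) [1..<N+1] = map (\<lambda>i. Bs0 ! (\<sigma> (Suc i) - 1)) [0..<N]"
    unfolding upt_shift by (simp add: comp_def)
  also have "\<dots> = map (\<lambda>i. Bs0 ! p i) [0..<N]"
    by (rule map_cong) (auto simp: \<sigma>_def)
  also have "\<dots> = blocks x" using p(2) NB unfolding permute_list_def by simp
  finally have "permw \<sigma> w0 = x"
    unfolding permw_def Bs0_def N_def using Wset_blocks(1)[OF x(1)] by simp
  then show "x \<in> Cls A n w0" unfolding Cls_def N_def using sp x(1) by (auto simp: N_def)
qed




lemma concat_pw: "concat (pw z r) = pw (concat z) r"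
  by (induction r) auto

lemma lexless_irrefl: "\<not> lexless x x"
  unfolding lexless_def by (rule lexord_irreflexive) auto

lemma lexless_trans: "lexless x y \<Longrightarrow> lexless y z \<Longrightarrow> lexless x z"
  unfolding lexless_def by (rule lexord_trans) (auto simp: trans_def)

lemma lexless_total: "x \<noteq> y \<Longrightarrow> lexless x y \<or> lexless y x"
proof -
  have "\<forall>a b. (a, b) \<in> {(a::nat, b). a < b} \<or> a = b \<or> (b, a) \<in> {(a::nat, b). a < b}" by auto
  from lexord_linear[OF this, of x y] show "x \<noteq> y \<Longrightarrow> lexless x y \<or> lexless y x"
    unfolding lexless_def by blast
qed

lemma rank_bij:
  fixes R :: "nat \<Rightarrow> nat list"
  assumes inj: "inj_on R S" and fin: "finite S"
  defines "rk \<equiv> (\<lambda>j. card {k\<in>S. lexless (R k) (R j)})"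
  shows "inj_on rk S" "rk ` S = {..<card S}"
proof -
  have lt: "rk a < rk b" if "a \<in> S" "b \<in> S" "lexless (R a) (R b)" for a b
  proof -
    have "{k\<in>S. lexless (R k) (R a)} \<subset> {k\<in>S. lexless (R k) (R b)}"
      using that lexless_trans lexless_irrefl by blast
    then show ?thesis unfolding rk_def using fin by (intro psubset_card_mono) auto
  qed
  show inj2: "inj_on rk S"
  proof (rule inj_onI)
    fix a b assume ab: "a \<in> S" "b \<in> S" "rk a = rk b"
    show "a = b"
    proof (rule ccontr)
      assume "a \<noteq> b"
      then have "R a \<noteq> R b" using inj ab by (meson inj_onD)
      then show False using lexless_total[of "R a" "R b"] lt[of a b] lt[of b a] ab by auto
    qed
  qed
  have sub: "rk ` S \<subseteq> {..<card S}"
  proof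
    fix y assume "y \<in> rk ` S"
    then obtain j where j: "j \<in> S" "y = rk j" by auto
    have "{k\<in>S. lexless (R k) (R j)} \<subset> S" using j lexless_irrefl by blast
    then have "rk j < card S" unfolding rk_def using fin by (intro psubset_card_mono) auto
    then show "y \<in> {..<card S}" using j by simp
  qed
  moreover have "card (rk ` S) = card {..<card S}" using card_image[OF inj2] by simp
  ultimately show "rk ` S = {..<card S}" by (intro card_subset_eq) auto
qed

definition RS :: "nat list list \<Rightarrow> nat list set" where
  "RS Bs = range (\<lambda>d. concat (rotate d Bs))"

context
  fixes A n w
  assumes w: "w \<in> Wset A n"
begin

lemma Nb_pos: "0 < Nb w"
  using Wset_blocks(3)[OF w] unfolding Nb_def by simp

lemma rot_eq: "k \<in> {1..Nb w} \<Longrightarrow> rot w k = concat (rotate (k - 1) (blocks w))"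
proof -
  assume k: "k \<in> {1..Nb w}"
  then have "(k - 1) mod length (blocks w) = k - 1" unfolding Nb_def by (intro mod_less) auto
  then show ?thesis unfolding rot_def using rotate_drop_take[of "k - 1" "blocks w"] by simp
qed

lemma rot_neq:
  assumes ab: "a \<in> {1..Nb w}" "b \<in> {1..Nb w}" "a < b"
  shows "rot w a \<noteq> rot w b"
proof
  assume eq: "rot w a = rot w b"
  define Bs where "Bs = blocks w"
  define N where "N = length Bs"
  have NN: "Nb w = N" unfolding N_def Bs_def Nb_def ..
  note wb = Wset_blocks[OF w]
  have "concat (rotate (a - 1) Bs) = concat (rotate (b - 1) Bs)"
    using eq rot_eq ab unfolding Bs_def by simp
  then have rr: "rotate (a - 1) Bs = rotate (b - 1) Bs"
    by (rule blocks_unique[rotated 2]) (use wb(2) in \<open>auto simp: Bs_def\<close>)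
  have "Bs = rotate (N - (a - 1)) (rotate (a - 1) Bs)"
    using ab NN by (simp add: rotate_rotate N_def)
  also have "\<dots> = rotate (N - (a - 1)) (rotate (b - 1) Bs)" using rr by simp
  also have "\<dots> = rotate (N + (b - a)) Bs" using ab NN by (simp add: rotate_rotate)
  also have "\<dots> = rotate ((N + (b - a)) mod length Bs) Bs" by (rule rotate_conv_mod)
  also have "\<dots> = rotate ((b - a) mod length Bs) Bs" by (simp add: N_def)
  also have "\<dots> = rotate (b - a) Bs" by (rule rotate_conv_mod[symmetric])
  finally have "rotate (b - a) Bs = Bs" by simp
  moreover have "0 < b - a" "b - a < length Bs" using ab NN N_def by auto
  ultimately obtain z r where zr: "r \<ge> 2" "Bs = pw z r" using rotate_fix_pow[of "b - a" Bs] by blast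
  then have "w = pw (concat z) r" using wb(1) concat_pw unfolding Bs_def by metis
  then show False using zr(1) w unfolding Wset_def primitive_def by blast
qed

lemma rot_inj: "inj_on (rot w) {1..Nb w}"
proof (rule inj_onI)
  fix a b assume "a \<in> {1..Nb w}" "b \<in> {1..Nb w}" "rot w a = rot w b"
  then show "a = b" using rot_neq[of a b] rot_neq[of b a] by (metis linorder_neqE_nat)
qed

lemma rbar_bij: "inj_on (rbar w) {1..Nb w}" "rbar w ` {1..Nb w} = {1..Nb w}"
proof -
  define rk where "rk = (\<lambda>j. card {k\<in>{1..Nb w}. lexless (rot w k) (rot w j)})"
  have rb: "rbar w j = Suc (rk j)" if "j \<in> {1..Nb w}" for j
    using that unfolding rbar_def rk_def by simp
  have i: "inj_on rk {1..Nb w}" and im: "rk ` {1..Nb w} = {..<Nb w}"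
    using rank_bij[OF rot_inj] unfolding rk_def by auto
  show "inj_on (rbar w) {1..Nb w}"
  proof (rule inj_onI)
    fix a b assume ab: "a \<in> {1..Nb w}" "b \<in> {1..Nb w}" "rbar w a = rbar w b"
    then have "rk a = rk b" using rb[OF ab(1)] rb[OF ab(2)] by simp
    then show "a = b" using inj_onD[OF i _ ab(1) ab(2)] by blast
  qed
  have "rbar w ` {1..Nb w} = (\<lambda>j. Suc (rk j)) ` {1..Nb w}" by (rule image_cong) (simp_all add: rb)
  also have "\<dots> = Suc ` rk ` {1..Nb w}" by (simp add: image_image)
  also have "\<dots> = {1..Nb w}" using im by (simp add: image_Suc_lessThan)
  finally show "rbar w ` {1..Nb w} = {1..Nb w}" .
qed

lemma rbar_RS: "j \<in> {1..Nb w} \<Longrightarrow> rbar w j = card {y \<in> RS (blocks w). lexless y (rot w j)} + 1"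
proof -
  assume j: "j \<in> {1..Nb w}"
  have img: "rot w ` {1..Nb w} = RS (blocks w)"
  proof
    show "rot w ` {1..Nb w} \<subseteq> RS (blocks w)" using rot_eq unfolding RS_def by auto
    show "RS (blocks w) \<subseteq> rot w ` {1..Nb w}"
    proof
      fix y assume "y \<in> RS (blocks w)"
      then obtain d where d: "y = concat (rotate d (blocks w))" unfolding RS_def by auto
      have dm: "d mod Nb w + 1 \<in> {1..Nb w}" using Nb_pos by (simp add: Suc_le_eq)
      have "y = concat (rotate (d mod Nb w) (blocks w))" using d by (metis rotate_conv_mod Nb_def)
      also have "\<dots> = rot w (d mod Nb w + 1)"
        using rot_eq[OF dm] by simp
      finally show "y \<in> rot w ` {1..Nb w}" using dm by (rule image_eqI)
    qed
  qed
  have "{y \<in> RS (blocks w). lexless y (rot w j)} = rot w ` {k\<in>{1..Nb w}. lexless (rot w k) (rot w j)}"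
    unfolding img[symmetric] by blast
  moreover have "card (rot w ` {k\<in>{1..Nb w}. lexless (rot w k) (rot w j)}) = card {k\<in>{1..Nb w}. lexless (rot w k) (rot w j)}"
    by (rule card_image) (rule inj_on_subset[OF rot_inj], auto)
  ultimately show ?thesis using j unfolding rbar_def by simp
qed

end




lemma rotate_inj: "rotate k xs = rotate k ys \<Longrightarrow> xs = ys"
  by (induction k) (auto dest: injD[OF inj_rotate1])

lemma mset_rotate1: "mset (rotate1 xs) = mset xs"
  by (cases xs) auto

lemma mset_rotate: "mset (rotate k xs) = mset xs"
  by (induction k) (auto simp: mset_rotate1)

lemma RS_rotate: "RS (rotate k Bs) = RS Bs"
proof
  show "RS (rotate k Bs) \<subseteq> RS Bs"
  proof
    fix y assume "y \<in> RS (rotate k Bs)"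
    then obtain d where "y = concat (rotate d (rotate k Bs))" unfolding RS_def by auto
    then have "y = concat (rotate (d + k) Bs)" by (simp add: rotate_rotate)
    then show "y \<in> RS Bs" unfolding RS_def by (metis rangeI)
  qed
  show "RS Bs \<subseteq> RS (rotate k Bs)"
  proof
    fix y assume "y \<in> RS Bs"
    then obtain e where e: "y = concat (rotate e Bs)" unfolding RS_def by auto
    define L where "L = length Bs"
    show "y \<in> RS (rotate k Bs)"
    proof (cases "L = 0")
      case True then show ?thesis using e unfolding RS_def L_def by auto
    next
      case False
      define k' where "k' = k mod L"
      have kL: "k' < L" using False unfolding k'_def by simp
      have "rotate k Bs = rotate k' Bs" unfolding k'_def L_def by (rule rotate_conv_mod)
      then have "rotate (e + (L - k')) (rotate k Bs) = rotate (e + L) Bs"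
        using kL by (simp add: rotate_rotate)
      also have "\<dots> = rotate ((e + L) mod length Bs) Bs" by (rule rotate_conv_mod)
      also have "\<dots> = rotate (e mod length Bs) Bs" by (simp add: L_def)
      also have "\<dots> = rotate e Bs" by (rule rotate_conv_mod[symmetric])
      finally show ?thesis using e unfolding RS_def by (metis rangeI)
    qed
  qed
qed

context
  fixes A n w0
  assumes w0: "w0 \<in> Wset A n"
begin

lemma Cls_mem: "w \<in> Cls A n w0 \<Longrightarrow> w \<in> Wset A n \<and> mset (blocks w) = mset (blocks w0)"
  using Cls_char[OF w0] by auto

lemma Cls_Nb: "w \<in> Cls A n w0 \<Longrightarrow> Nb w = Nb w0"
  using Cls_mem unfolding Nb_def by (metis size_mset)

lemma Cls_mset: "w \<in> Cls A n w0 \<Longrightarrow> mset w = mset w0"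
  using Cls_mem mset_concat_eq Wset_blocks(1)[OF w0] Wset_blocks(1) by metis

lemma self_Cls: "w0 \<in> Cls A n w0"
  using Cls_char[OF w0] w0 by auto

lemma finite_Cls: "finite (Cls A n w0)"
proof -
  have "Cls A n w0 \<subseteq> {xs. set xs \<subseteq> set w0 \<and> length xs = length w0}"
  proof
    fix x assume "x \<in> Cls A n w0"
    then have "mset x = mset w0" by (rule Cls_mset)
    then have "set x = set w0" "length x = length w0"
      by (metis set_mset_mset, metis size_mset)
    then show "x \<in> {xs. set xs \<subseteq> set w0 \<and> length xs = length w0}" by simp
  qed
  then show ?thesis by (rule finite_subset) (rule finite_lists_length_eq, simp)
qed

lemma card_Cls_pos: "0 < card (Cls A n w0)"
  using finite_Cls self_Cls by (metis card_gt_0_iff empty_iff)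

lemma rotC:
  assumes w: "w \<in> Cls A n w0"
  shows "concat (rotate d (blocks w)) \<in> Cls A n w0"
    "blocks (concat (rotate d (blocks w))) = rotate d (blocks w)"
proof -
  define Bs where "Bs = blocks w"
  have wW: "w \<in> Wset A n" and ms: "mset Bs = mset (blocks w0)" using Cls_mem[OF w] Bs_def by auto
  have ms': "mset (rotate d Bs) = mset (blocks w0)" using ms by (simp add: mset_rotate)
  define e where "e = d mod length Bs"
  have r: "rotate d Bs = drop e Bs @ take e Bs" unfolding e_def by (rule rotate_drop_take)
  have "w = concat (take e Bs) @ concat (drop e Bs)"
    using Wset_blocks(1)[OF wW] unfolding Bs_def by (metis append_take_drop_id concat_append)
  then have "primitive (concat (drop e Bs) @ concat (take e Bs))"
    using wW primitive_swap unfolding Wset_def by auto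
  then have p: "primitive (concat (rotate d Bs))" using r by simp
  show b: "blocks (concat (rotate d (blocks w))) = rotate d (blocks w)"
    using perm_blocks(1)[OF w0 ms'] Bs_def by simp
  have "concat (rotate d Bs) \<in> Wset A n" using perm_blocks(3)[OF w0 ms'] p by simp
  then show "concat (rotate d (blocks w)) \<in> Cls A n w0"
    using Cls_char[OF w0] b ms' Bs_def by simp
qed

lemma shift_rank:
  assumes w: "w \<in> Cls A n w0" and j: "j \<in> {1..Nb w0}"
  shows "rbar (rot w j) 1 = rbar w j"
proof -
  have wW: "w \<in> Wset A n" using Cls_mem[OF w] by simp
  have jw: "j \<in> {1..Nb w}" using j Cls_Nb[OF w] by simp
  define w' where "w' = rot w j"
  have w'eq: "w' = concat (rotate (j - 1) (blocks w))" unfolding w'_def using rot_eq[OF wW jw] .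
  have w'C: "w' \<in> Cls A n w0" and bw': "blocks w' = rotate (j - 1) (blocks w)"
    using rotC[OF w, of "j - 1"] w'eq by auto
  have w'W: "w' \<in> Wset A n" using Cls_mem[OF w'C] by simp
  have one: "1 \<in> {1..Nb w'}" using Nb_pos[OF w'W] by simp
  have "rot w' 1 = w'" using rot_eq[OF w'W one] Wset_blocks(1)[OF w'W] by simp
  then have "rbar w' 1 = card {y \<in> RS (blocks w'). lexless y (rot w j)} + 1"
    using rbar_RS[OF w'W one] w'_def by simp
  also have "RS (blocks w') = RS (blocks w)" using bw' RS_rotate by simp
  also have "card {y \<in> RS (blocks w). lexless y (rot w j)} + 1 = rbar w j"
    using rbar_RS[OF wW jw] by simp
  finally show ?thesis unfolding w'_def .
qed

end




lemma Bbar_list: "map (Bbar w) [1..<Nb w + 1] = blocks w"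
proof -
  have "map (Bbar w) [1..<Nb w + 1] = map (\<lambda>i. blocks w ! (i - 1)) [1..<Nb w + 1]"
    by (rule map_cong) (auto simp: Bbar_def)
  also have "\<dots> = blocks w" unfolding Nb_def by (rule list_idx)
  finally show ?thesis .
qed

lemma rbar_mset:
  assumes w: "w \<in> Wset A n"
  shows "mset (map (rbar w) [1..<Nb w + 1]) = mset [1..<Nb w + 1]"
proof -
  have s: "set [1..<Nb w + 1] = {1..Nb w}" by auto
  have "distinct (map (rbar w) [1..<Nb w + 1])"
    using rbar_bij(1)[OF w] s by (simp add: distinct_map)
  moreover have "set (map (rbar w) [1..<Nb w + 1]) = set [1..<Nb w + 1]"
    using rbar_bij(2)[OF w] s by simp
  moreover have "distinct [1..<Nb w + 1]" by (rule distinct_upt)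
  ultimately show ?thesis by (metis set_eq_iff_mset_eq_distinct)
qed

lemma Cls_same:
  assumes c: "c \<in> Wset A n" and w: "w \<in> Cls A n c"
  shows "Cls A n w = Cls A n c"
proof -
  have "w \<in> Wset A n" "mset (blocks w) = mset (blocks c)" using Cls_mem[OF c w] by auto
  have "Cls A n w = {x \<in> Wset A n. mset (blocks x) = mset (blocks w)}"
    by (rule Cls_char[OF \<open>w \<in> Wset A n\<close>])
  also have "\<dots> = {x \<in> Wset A n. mset (blocks x) = mset (blocks c)}"
    using \<open>mset (blocks w) = mset (blocks c)\<close> by simp
  also have "\<dots> = Cls A n c" using Cls_char[OF c] by simp
  finally show ?thesis .
qed

lemma card_filter_sum: "finite S \<Longrightarrow> card {x\<in>S. P x} = (\<Sum>x\<in>S. if P x then 1 else 0)"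
  by (subst card_eq_sum) (rule sum.inter_filter)

context
  fixes A n w0
  assumes w0: "w0 \<in> Wset A n"
begin

lemma S_card_eq:
  assumes j: "j \<in> {1..Nb w0}"
  shows "card {w\<in>Cls A n w0. rbar w j = i} = card {w\<in>Cls A n w0. rbar w 1 = i}"
proof -
  define C where "C = Cls A n w0"
  define N where "N = Nb w0"
  define F where "F = (\<lambda>w. rot w j)"
  have Feq: "F w = concat (rotate (j - 1) (blocks w))" if "w \<in> C" for w
  proof -
    have "w \<in> Wset A n" "Nb w = N" using Cls_mem[OF w0] Cls_Nb[OF w0] that C_def N_def by auto
    then show ?thesis using rot_eq[of w A n j] j N_def F_def by simp
  qed
  have inj: "inj_on F {w\<in>C. rbar w j = i}"
  proof (rule inj_onI)
    fix a b assume ab: "a \<in> {w\<in>C. rbar w j = i}" "b \<in> {w\<in>C. rbar w j = i}" "F a = F b"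
    then have "blocks (F a) = blocks (F b)" by simp
    then have "rotate (j - 1) (blocks a) = rotate (j - 1) (blocks b)"
      using ab Feq rotC(2)[OF w0, of a "j - 1"] rotC(2)[OF w0, of b "j - 1"] C_def by auto
    then have "blocks a = blocks b" by (rule rotate_inj)
    moreover have "a \<in> Wset A n" "b \<in> Wset A n" using ab Cls_mem[OF w0] C_def by auto
    ultimately show "a = b" using Wset_blocks(1) by metis
  qed
  have img: "F ` {w\<in>C. rbar w j = i} = {w\<in>C. rbar w 1 = i}"
  proof
    show "F ` {w\<in>C. rbar w j = i} \<subseteq> {w\<in>C. rbar w 1 = i}"
    proof
      fix y assume "y \<in> F ` {w\<in>C. rbar w j = i}"
      then obtain w where w: "w \<in> C" "rbar w j = i" "y = F w" by auto
      have "y \<in> C" using w Feq rotC(1)[OF w0, of w "j - 1"] C_def by simp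
      moreover have "rbar y 1 = i" using shift_rank[OF w0, of w j] w j C_def F_def by simp
      ultimately show "y \<in> {w\<in>C. rbar w 1 = i}" by simp
    qed
  next
    show "{w\<in>C. rbar w 1 = i} \<subseteq> F ` {w\<in>C. rbar w j = i}"
    proof
      fix u assume u: "u \<in> {w\<in>C. rbar w 1 = i}"
      then have uC: "u \<in> C" and ui: "rbar u 1 = i" by auto
      have uW: "u \<in> Wset A n" and uN: "Nb u = N" using Cls_mem[OF w0] Cls_Nb[OF w0] uC C_def N_def by auto
      define v where "v = concat (rotate (N - (j - 1)) (blocks u))"
      have vC: "v \<in> C" and bv: "blocks v = rotate (N - (j - 1)) (blocks u)"
        using rotC[OF w0, of u "N - (j - 1)"] uC C_def v_def by auto
      have "F v = concat (rotate (j - 1) (blocks v))" using Feq[OF vC] .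
      also have "\<dots> = concat (rotate N (blocks u))" using bv j N_def by (simp add: rotate_rotate)
      also have "\<dots> = u" using uN Wset_blocks(1)[OF uW] unfolding Nb_def by simp
      finally have Fv: "F v = u" .
      have "rbar v j = rbar (F v) 1" using shift_rank[OF w0, of v j] vC j C_def F_def by simp
      then have "rbar v j = i" using Fv ui by simp
      then show "u \<in> F ` {w\<in>C. rbar w j = i}" using vC Fv by force
    qed
  qed
  show ?thesis using card_image[OF inj] img C_def by simp
qed

lemma one_rank:
  assumes w: "w \<in> Cls A n w0" and i: "i \<in> {1..Nb w0}"
  shows "card {j\<in>{1..Nb w0}. rbar w j = i} = 1"
proof -
  have wW: "w \<in> Wset A n" and N: "Nb w = Nb w0" using Cls_mem[OF w0 w] Cls_Nb[OF w0 w] by auto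
  have "i \<in> rbar w ` {1..Nb w}" using rbar_bij(2)[OF wW] i N by simp
  then obtain j0 where j0: "j0 \<in> {1..Nb w}" "rbar w j0 = i" by auto
  have "{j\<in>{1..Nb w0}. rbar w j = i} = {j0}"
  proof (intro set_eqI iffI)
    fix j assume "j \<in> {j\<in>{1..Nb w0}. rbar w j = i}"
    then have "j \<in> {1..Nb w}" "rbar w j = rbar w j0" using j0 N by auto
    then have "j = j0" using inj_onD[OF rbar_bij(1)[OF wW]] j0(1) by blast
    then show "j \<in> {j0}" by simp
  next
    fix j assume "j \<in> {j0}"
    then show "j \<in> {j\<in>{1..Nb w0}. rbar w j = i}" using j0 N by simp
  qed
  then show ?thesis by simp
qed

lemma part3:
  assumes i: "i \<in> {1..Nb w0}" and j: "j \<in> {1..Nb w0}"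
  shows "real (card {w\<in>Cls A n w0. rbar w j = i}) / real (card (Cls A n w0)) = 1 / real (Nb w0)"
proof -
  define C where "C = Cls A n w0"
  define N where "N = Nb w0"
  define c where "c = card {w\<in>C. rbar w 1 = i}"
  have fin: "finite C" using finite_Cls[OF w0] C_def by simp
  have "(\<Sum>j\<in>{1..N}. card {w\<in>C. rbar w j = i}) = (\<Sum>j\<in>{1..N}. \<Sum>w\<in>C. if rbar w j = i then 1 else 0)"
    using fin by (simp add: card_filter_sum)
  also have "\<dots> = (\<Sum>w\<in>C. \<Sum>j\<in>{1..N}. if rbar w j = i then 1 else 0)" by (rule sum.swap)
  also have "\<dots> = (\<Sum>w\<in>C. card {j\<in>{1..N}. rbar w j = i})"
    by (intro sum.cong refl) (rule card_filter_sum[symmetric], simp)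
  also have "\<dots> = (\<Sum>w\<in>C. 1)"
  proof (rule sum.cong[OF refl])
    fix w assume "w \<in> C"
    then show "card {j\<in>{1..N}. rbar w j = i} = 1" using one_rank[of w i] i unfolding C_def N_def by blast
  qed
  finally have s1: "(\<Sum>j\<in>{1..N}. card {w\<in>C. rbar w j = i}) = card C" by simp
  have "(\<Sum>j\<in>{1..N}. card {w\<in>C. rbar w j = i}) = (\<Sum>j\<in>{1..N}. c)"
  proof (rule sum.cong[OF refl])
    fix j assume "j \<in> {1..N}"
    then show "card {w\<in>C. rbar w j = i} = c" using S_card_eq[of j i] unfolding C_def N_def c_def by blast
  qed
  then have cC: "card C = N * c" using s1 by simp
  have "0 < card C" using card_Cls_pos[OF w0] C_def by simp
  then have pos: "0 < N" "0 < c" using cC by auto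
  have "card {w\<in>C. rbar w j = i} = c" using S_card_eq[OF j, of i] unfolding C_def c_def .
  then have "real (card {w\<in>C. rbar w j = i}) / real (card C) = real c / (real N * real c)"
    using cC by simp
  also have "\<dots> = 1 / real N" using pos by simp
  finally show ?thesis unfolding C_def N_def .
qed

end




theorem lemma3:
  fixes A :: "nat set" and pr :: "nat \<Rightarrow> real" and n :: nat
  assumes alph: "(\<exists>K. K \<ge> 2 \<and> A = {1..K}) \<or> A = {1..}"
    and pos: "\<And>i. i \<in> A \<Longrightarrow> pr i > 0"
    and distr: "(pr has_sum 1) A"
    and p1: "0 < pr 1" "pr 1 < 1"
  shows "(\<forall>C\<in>Cn A n. \<forall>w\<in>C. \<forall>w'\<in>C.
            wp pr w = wp pr w' \<and> Nb w = Nb w'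
            \<and> mset (map (Bbar w) [1..<Nb w + 1]) = mset (map (Bbar w') [1..<Nb w' + 1])
            \<and> mset (map (rbar w) [1..<Nb w + 1]) = mset (map (rbar w') [1..<Nb w' + 1]))
       \<and> (\<forall>w. Wn A pr n w =
            (\<Sum>\<^sub>\<infinity>C\<in>Cn A n. real (card C) * pC pr C / PW A pr n * UC C w))
       \<and> (\<forall>C\<in>Cn A n. \<forall>w0\<in>C. \<forall>i\<in>{1..Nb w0}. \<forall>j\<in>{1..Nb w0}.
            real (card {w\<in>C. rbar w j = i}) / real (card C) = 1 / real (Nb w0))"
proof (intro conjI ballI allI)
  fix C w w' assume C: "C \<in> Cn A n" and w: "w \<in> C" and w': "w' \<in> C"
  obtain c where c: "c \<in> Wset A n" "C = Cls A n c" using C unfolding Cn_def by auto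
  have m1: "mset w = mset c" "mset w' = mset c" using Cls_mset[OF c(1)] w w' c(2) by auto
  have N1: "Nb w = Nb c" "Nb w' = Nb c" using Cls_Nb[OF c(1)] w w' c(2) by auto
  have W1: "w \<in> Wset A n" "mset (blocks w) = mset (blocks c)" using Cls_mem[OF c(1)] w c(2) by auto
  have W2: "w' \<in> Wset A n" "mset (blocks w') = mset (blocks c)" using Cls_mem[OF c(1)] w' c(2) by auto
  show "wp pr w = wp pr w'" using m1 wp_mset by metis
  show "Nb w = Nb w'" using N1 by simp
  show "mset (map (Bbar w) [1..<Nb w + 1]) = mset (map (Bbar w') [1..<Nb w' + 1])"
    using W1 W2 by (simp only: Bbar_list)
  show "mset (map (rbar w) [1..<Nb w + 1]) = mset (map (rbar w') [1..<Nb w' + 1])"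
    using rbar_mset[OF W1(1)] rbar_mset[OF W2(1)] N1 by simp
next
  fix w
  define f where "f = (\<lambda>C. real (card C) * pC pr C / PW A pr n * UC C w)"
  have sub: "C \<subseteq> Wset A n" if "C \<in> Cn A n" for C
    using that Cls_mem unfolding Cn_def by blast
  show "Wn A pr n w = (\<Sum>\<^sub>\<infinity>C\<in>Cn A n. real (card C) * pC pr C / PW A pr n * UC C w)"
  proof (cases "w \<in> Wset A n")
    case False
    have "(\<Sum>\<^sub>\<infinity>C\<in>Cn A n. real (card C) * pC pr C / PW A pr n * UC C w) = 0"
      by (rule infsum_0) (use sub False in \<open>auto simp: UC_def\<close>)
    then show ?thesis using False unfolding Wn_def by simp
  next
    case True
    define C0 where "C0 = Cls A n w"
    have C0: "C0 \<in> Cn A n" unfolding C0_def Cn_def using True by simp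
    have wC0: "w \<in> C0" unfolding C0_def by (rule self_Cls[OF True])
    have uniq: "C = C0" if h: "C \<in> Cn A n" "w \<in> C" for C
    proof -
      obtain c where c: "c \<in> Wset A n" "C = Cls A n c" using h unfolding Cn_def by auto
      show ?thesis using Cls_same[OF c(1)] h c unfolding C0_def by simp
    qed
    have "(\<Sum>\<^sub>\<infinity>C\<in>Cn A n. f C) = (\<Sum>\<^sub>\<infinity>C\<in>{C0}. f C)"
      by (rule infsum_cong_neutral) (use C0 uniq in \<open>auto simp: f_def UC_def\<close>)
    also have "\<dots> = f C0" by simp
    also have "\<dots> = pC pr C0 / PW A pr n"
      using card_Cls_pos[OF True] wC0 unfolding f_def UC_def C0_def by simp
    also have "pC pr C0 = wp pr w"
    proof -
      have "(SOME x. x \<in> C0) \<in> C0" using wC0 by (rule someI)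
      then have "mset (SOME x. x \<in> C0) = mset w" using Cls_mset[OF True] unfolding C0_def by simp
      then show ?thesis unfolding pC_def by (rule wp_mset)
    qed
    finally show ?thesis using True unfolding Wn_def f_def by simp
  qed
next
  fix C w0 i j assume C: "C \<in> Cn A n" and w0: "w0 \<in> C" and i: "i \<in> {1..Nb w0}" and j: "j \<in> {1..Nb w0}"
  obtain c where c: "c \<in> Wset A n" "C = Cls A n c" using C unfolding Cn_def by auto
  have w0W: "w0 \<in> Wset A n" using Cls_mem[OF c(1)] w0 c(2) by auto
  have "C = Cls A n w0" using Cls_same[OF c(1)] w0 c(2) by simp
  then show "real (card {w\<in>C. rbar w j = i}) / real (card C) = 1 / real (Nb w0)"
    using part3[OF w0W i j] by simp
qed



end
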